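(* Let $G$ be a connected graph containing a longest path $L=x_0x_1\ldots x_p$ and a path $P$ of length at least $p-2$. Suppose $|V(P)\cap V(L)|\ge 1$ and let $r=\lceil p/2\rceil$. Then: (1) if $V(P)\cap\{x_r,x_{r+1},\ldots,x_p\}=\emptyset$, then $x_{r-1}\in V(P)$; (2) if $V(P)\cap\{x_0,\ldots,x_{r-1}\}=\emptyset$ and $\ell(P)\ge p-1$, then $x_r\in V(P)$; (3) if $V(P)\cap\{x_0,\ldots,x_{r-1}\}=\emptyset$ and $\ell(P)=p-2$, then $x_r\in V(P)$ or $x_{r+1}\in V(P)$.
   Context: All graphs are finite, simple and undirected. $\ell(P)$ denotes the length (number of edges) of a path $P$; a longest path is one of maximum length in $G$. *)

theory Defs
  imports Complex_Main
begin

definition simple_graph :: "'a set \<Rightarrow> ('a \<Rightarrow> 'a \<Rightarrow> bool) \<Rightarrow> bool" where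
  "simple_graph V E \<longleftrightarrow> finite V \<and> (\<forall>u v. E u v \<longrightarrow> E v u) \<and> (\<forall>v. \<not> E v v)
     \<and> (\<forall>u v. E u v \<longrightarrow> u \<in> V \<and> v \<in> V)"

definition is_path :: "'a set \<Rightarrow> ('a \<Rightarrow> 'a \<Rightarrow> bool) \<Rightarrow> 'a list \<Rightarrow> bool" where
  "is_path V E P \<longleftrightarrow> P \<noteq> [] \<and> distinct P \<and> set P \<subseteq> V
     \<and> (\<forall>i. Suc i < length P \<longrightarrow> E (P ! i) (P ! Suc i))"

definition path_len :: "'a list \<Rightarrow> nat" where
  "path_len P = length P - 1"

definition longest_path :: "'a set \<Rightarrow> ('a \<Rightarrow> 'a \<Rightarrow> bool) \<Rightarrow> 'a list \<Rightarrow> bool" where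
  "longest_path V E L \<longleftrightarrow> is_path V E L \<and> (\<forall>P. is_path V E P \<longrightarrow> path_len P \<le> path_len L)"

definition connected_graph :: "'a set \<Rightarrow> ('a \<Rightarrow> 'a \<Rightarrow> bool) \<Rightarrow> bool" where
  "connected_graph V E \<longleftrightarrow> V \<noteq> {} \<and> (\<forall>u\<in>V. \<forall>v\<in>V. \<exists>P. is_path V E P \<and> hd P = u \<and> last P = v)"

end

theory Submission
  imports Defs
begin

lemma is_path_alt: "is_path V E P \<longleftrightarrow> P \<noteq> [] \<and> distinct P \<and> set P \<subseteq> V \<and> successively E P"
  unfolding is_path_def successively_conv_nth by blast

lemma succ_take: "successively E xs \<Longrightarrow> successively E (take n xs)"
  by (metis append_take_drop_id successively_append_iff)

lemma succ_drop: "successively E xs \<Longrightarrow> successively E (drop n xs)"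
  by (metis append_take_drop_id successively_append_iff)

lemma succ_rev: "(\<And>u v. E u v \<Longrightarrow> E v u) \<Longrightarrow> successively E xs \<Longrightarrow> successively E (rev xs)"
  unfolding successively_rev by (erule successively_mono) blast

lemma succ_flip: "(\<And>u v. E u v \<Longrightarrow> E v u) \<Longrightarrow> successively E xs \<Longrightarrow> successively (\<lambda>x y. E y x) xs"
  by (erule successively_mono) blast

lemma join:
  assumes "A @ B \<noteq> []" "distinct A" "distinct B" "set A \<subseteq> V" "set B \<subseteq> V"
    "successively E A" "successively E B" "set A \<inter> set B = {}"
    "A \<noteq> [] \<Longrightarrow> B \<noteq> [] \<Longrightarrow> E (last A) (hd B)"
  shows "is_path V E (A @ B)"
  unfolding is_path_alt using assms by (auto simp: successively_append_iff)

lemma core_A: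
  assumes sym: "\<And>u v. E u v \<Longrightarrow> E v u"
    and L: "longest_path V E L" and P: "is_path V E P"
    and j: "j < length L" and k: "k < length P" and eq: "L ! j = P ! k"
    and disj: "set P \<inter> set (drop (Suc j) L) = {}"
  shows "path_len P \<le> 2 * j"
proof -
  have Lp: "is_path V E L" and Lmax: "\<And>Q. is_path V E Q \<Longrightarrow> path_len Q \<le> path_len L"
    using L unfolding longest_path_def by auto
  from Lp have Ld: "distinct L" "set L \<subseteq> V" "successively E L" by (auto simp: is_path_alt)
  from P have Pd: "distinct P" "set P \<subseteq> V" "successively E P" by (auto simp: is_path_alt)
  have s1: "set (take (Suc k) P) \<subseteq> set P" by (rule set_take_subset)
  have s2: "set (drop k P) \<subseteq> set P" by (rule set_drop_subset)
  have "is_path V E (take (Suc k) P @ drop (Suc j) L)"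
  proof (rule join)
    show "E (last (take (Suc k) P)) (hd (drop (Suc j) L))" if "drop (Suc j) L \<noteq> []"
    proof -
      have "last (take (Suc k) P) = P ! k" using k by (simp add: take_Suc_conv_app_nth)
      moreover have "hd (drop (Suc j) L) = L ! Suc j" using that by (simp add: hd_drop_conv_nth)
      moreover have "Suc j < length L" using that by simp
      ultimately show ?thesis using Ld(3) eq by (metis successively_nth)
    qed
  qed (use k Ld Pd s1 disj set_drop_subset[of "Suc j" L] in \<open>auto intro: succ_take succ_drop\<close>)
  then have 1: "path_len (take (Suc k) P @ drop (Suc j) L) \<le> path_len L" by (rule Lmax)
  have "is_path V E (rev (drop (Suc j) L) @ drop k P)"
  proof (rule join)
    show "E (last (rev (drop (Suc j) L))) (hd (drop k P))" if "rev (drop (Suc j) L) \<noteq> []"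
    proof -
      have "hd (drop k P) = P ! k" using k by (simp add: hd_drop_conv_nth)
      moreover have "last (rev (drop (Suc j) L)) = L ! Suc j" using that by (simp add: last_rev hd_drop_conv_nth)
      moreover have "Suc j < length L" using that by simp
      ultimately show ?thesis using Ld(3) eq sym by (metis successively_nth)
    qed
  qed (use k Ld Pd s2 disj set_drop_subset[of "Suc j" L] sym in \<open>auto intro: succ_take succ_drop succ_flip\<close>)
  then have 2: "path_len (rev (drop (Suc j) L) @ drop k P) \<le> path_len L" by (rule Lmax)
  show ?thesis using 1 2 j k unfolding path_len_def by simp
qed

lemma core_B:
  assumes sym: "\<And>u v. E u v \<Longrightarrow> E v u"
    and L: "longest_path V E L" and P: "is_path V E P"
    and j: "j < length L" and k: "k < length P" and eq: "L ! j = P ! k"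
    and disj: "set P \<inter> set (take j L) = {}"
  shows "path_len P \<le> 2 * (path_len L - j)"
proof -
  have Lp: "is_path V E L" and Lmax: "\<And>Q. is_path V E Q \<Longrightarrow> path_len Q \<le> path_len L"
    using L unfolding longest_path_def by auto
  from Lp have Ld: "distinct L" "set L \<subseteq> V" "successively E L" by (auto simp: is_path_alt)
  from P have Pd: "distinct P" "set P \<subseteq> V" "successively E P" by (auto simp: is_path_alt)
  have s1: "set (take (Suc k) P) \<subseteq> set P" by (rule set_take_subset)
  have s2: "set (drop k P) \<subseteq> set P" by (rule set_drop_subset)
  have lastt: "E (last (take j L)) (L ! j)" if "take j L \<noteq> []"
  proof -
    from that have j0: "j = Suc (j - 1)" by simp
    have "last (take j L) = L ! (j - 1)" using j j0
      by (metis Suc_lessD last_snoc take_Suc_conv_app_nth)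
    then show ?thesis using Ld(3) j j0 by (metis successively_nth)
  qed
  have "is_path V E (take j L @ drop k P)"
  proof (rule join)
    show "E (last (take j L)) (hd (drop k P))" if "take j L \<noteq> []" "drop k P \<noteq> []"
      using lastt[OF that(1)] k eq by (simp add: hd_drop_conv_nth)
  qed (use k Ld Pd s2 disj set_take_subset[of j L] in \<open>auto intro: succ_take succ_drop\<close>)
  then have 1: "path_len (take j L @ drop k P) \<le> path_len L" by (rule Lmax)
  have "is_path V E (take j L @ rev (take (Suc k) P))"
  proof (rule join)
    show "E (last (take j L)) (hd (rev (take (Suc k) P)))" if "take j L \<noteq> []" "rev (take (Suc k) P) \<noteq> []"
      using lastt[OF that(1)] k eq by (simp add: hd_rev take_Suc_conv_app_nth)
  qed (use k Ld Pd s1 disj set_take_subset[of j L] sym in \<open>auto intro: succ_take succ_drop succ_flip\<close>)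
  then have 2: "path_len (take j L @ rev (take (Suc k) P)) \<le> path_len L" by (rule Lmax)
  show ?thesis using 1 2 j k unfolding path_len_def by simp
qed

lemma in_drop: "x \<in> set (drop n xs) \<Longrightarrow> \<exists>i. n \<le> i \<and> i < length xs \<and> xs ! i = x"
  by (auto simp: in_set_conv_nth) (metis add.commute le_add1 less_diff_conv)

lemma in_take: "x \<in> set (take n xs) \<Longrightarrow> \<exists>i. i < n \<and> i < length xs \<and> xs ! i = x"
  by (auto simp: in_set_conv_nth)

theorem lemma3:
  fixes V :: "'a set" and E :: "'a \<Rightarrow> 'a \<Rightarrow> bool" and L P :: "'a list" and p r :: nat
  assumes "simple_graph V E"
    and "connected_graph V E"
    and "longest_path V E L"
    and "p = path_len L"
    and "is_path V E P"
    and "path_len P + 2 \<ge> p"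
    and "set P \<inter> set L \<noteq> {}"
    and "r = nat \<lceil>real p / 2\<rceil>"
  shows "(set P \<inter> {L ! i | i. r \<le> i \<and> i \<le> p} = {} \<longrightarrow> L ! (r - 1) \<in> set P)
       \<and> (set P \<inter> {L ! i | i. i < r} = {} \<and> path_len P + 1 \<ge> p \<longrightarrow> L ! r \<in> set P)
       \<and> (set P \<inter> {L ! i | i. i < r} = {} \<and> path_len P + 2 = p
            \<longrightarrow> L ! r \<in> set P \<or> L ! (r + 1) \<in> set P)"
proof -
  have sym: "\<And>u v. E u v \<Longrightarrow> E v u" using assms(1) unfolding simple_graph_def by blast
  have Lp: "is_path V E L" using assms(3) unfolding longest_path_def by blast
  have lenL: "length L = Suc p" using Lp assms(4) unfolding is_path_def path_len_def by auto
  have c0: "0 \<le> \<lceil>real p / 2\<rceil>" by simp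
  have rc: "real r = of_int \<lceil>real p / 2\<rceil>" using assms(8) c0 by simp
  have r1: "real p / 2 \<le> real r" using rc by (simp add: le_of_int_ceiling)
  have r2: "real r < real p / 2 + 1" using rc ceiling_correct[of "real p / 2"] by linarith
  from r1 r2 have rr: "p \<le> 2 * r" "2 * r \<le> p + 1" by linarith+
  define S where "S = {i. i \<le> p \<and> L ! i \<in> set P}"
  have Sfin: "finite S" unfolding S_def by simp
  have Sne: "S \<noteq> {}"
  proof -
    from assms(7) obtain x where "x \<in> set P" "x \<in> set L" by blast
    then obtain i where "i < length L" "L ! i = x" by (auto simp: in_set_conv_nth)
    then show ?thesis using lenL \<open>x \<in> set P\<close> unfolding S_def by (auto simp: less_Suc_eq_le)
  qed
  define jM where "jM = Max S"
  define jm where "jm = Min S"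
  have jM: "jM \<in> S" "\<And>i. i \<in> S \<Longrightarrow> i \<le> jM" using Sfin Sne unfolding jM_def by auto
  have jm: "jm \<in> S" "\<And>i. i \<in> S \<Longrightarrow> jm \<le> i" using Sfin Sne unfolding jm_def by auto
  have PM: "path_len P \<le> 2 * jM"
  proof -
    from jM(1) obtain k where k: "k < length P" "P ! k = L ! jM" unfolding S_def by (auto simp: in_set_conv_nth)
    have "set P \<inter> set (drop (Suc jM) L) = {}"
    proof (rule ccontr)
      assume "set P \<inter> set (drop (Suc jM) L) \<noteq> {}"
      then obtain x where "x \<in> set P" "x \<in> set (drop (Suc jM) L)" by blast
      then obtain i where "Suc jM \<le> i" "i < length L" "L ! i = x" using in_drop by metis
      then have "i \<in> S" using lenL \<open>x \<in> set P\<close> unfolding S_def by auto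
      then show False using jM(2) \<open>Suc jM \<le> i\<close> by fastforce
    qed
    moreover have "jM < length L" using jM(1) lenL unfolding S_def by auto
    ultimately show ?thesis using core_A[OF sym assms(3) assms(5)] k by metis
  qed
  have Pm: "path_len P \<le> 2 * (p - jm)"
  proof -
    from jm(1) obtain k where k: "k < length P" "P ! k = L ! jm" unfolding S_def by (auto simp: in_set_conv_nth)
    have "set P \<inter> set (take jm L) = {}"
    proof (rule ccontr)
      assume "set P \<inter> set (take jm L) \<noteq> {}"
      then obtain x where "x \<in> set P" "x \<in> set (take jm L)" by blast
      then obtain i where "i < jm" "i < length L" "L ! i = x" using in_take by metis
      then have "i \<in> S" using lenL \<open>x \<in> set P\<close> unfolding S_def by auto
      then show False using jm(2) \<open>i < jm\<close> by fastforce
    qed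
    moreover have "jm < length L" using jm(1) lenL unfolding S_def by auto
    ultimately show ?thesis using core_B[OF sym assms(3) assms(5)] k assms(4) by metis
  qed
  have jMin: "jM \<le> p" "L ! jM \<in> set P" and jmin: "jm \<le> p" "L ! jm \<in> set P"
    using jM(1) jm(1) unfolding S_def by auto
  show ?thesis
  proof (intro conjI impI)
    assume "set P \<inter> {L ! i | i. r \<le> i \<and> i \<le> p} = {}"
    then have "\<not> r \<le> jM" using jMin by blast
    then have "jM = r - 1" using PM assms(6) rr by linarith
    then show "L ! (r - 1) \<in> set P" using jMin by simp
  next
    assume a: "set P \<inter> {L ! i | i. i < r} = {} \<and> p \<le> path_len P + 1"
    then have "\<not> jm < r" using jmin by blast
    then have "jm = r" using Pm conjunct2[OF a] rr jmin(1) by linarith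
    then show "L ! r \<in> set P" using jmin by simp
  next
    assume a: "set P \<inter> {L ! i | i. i < r} = {} \<and> path_len P + 2 = p"
    then have "\<not> jm < r" using jmin by blast
    then have "jm = r \<or> jm = r + 1" using Pm conjunct2[OF a] rr jmin(1) by linarith
    then show "L ! r \<in> set P \<or> L ! (r + 1) \<in> set P" using jmin by auto
  qed
qed

end
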